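(* Let $n\ge2$, $m\ge1$, and let $C$ be an $n$-copula, with $C_m=\mathscr{B}^n_m(C)$. On a probability space $(\Omega,P)$ let $(X_1,\ldots,X_n)$ be a random vector with joint distribution function $C$ (so each $X_r$ is uniform on $I$), and let $X_r^j$ ($r=1,\ldots,n$, $j=1,\ldots,m$) be i.i.d. uniform random variables on $I$, independent of $(X_1,\ldots,X_n)$. For each $r$ let $X_r^{(1)}<\cdots<X_r^{(m)}$ be the order statistics of $X_r^1,\ldots,X_r^m$ (a.s. distinct). For a multi-index $k=(k_1,\ldots,k_n)\in\{1,\ldots,m\}^n$ let $E_k$ be the event $\{\tfrac{k_r-1}{m}<X_r<\tfrac{k_r}{m}\text{ for all }r=1,\ldots,n\}$; these events are disjoint and their union has probability $1$. Define, almost surely, $Y_r=\sum_{k\in\{1,\ldots,m\}^n}\mathbf 1_{E_k}\,X_r^{(k_r)}$ for $r=1,\ldots,n$ (i.e. on $E_k$, $Y_r=X_r^{(k_r)}$). Then for all $(x_1,\ldots,x_n)\in I^n$, $$C_m(x_1,\ldots,x_n)=P(Y_1<x_1,\ldots,Y_n<x_n).$$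
   Context: $I=[0,1]$. An $n$-copula is a function $C:I^n\to I$ that is the joint distribution function of a random vector whose marginals are uniform on $I$ (equivalently: grounded, with uniform margins $C(1,\ldots,x_k,\ldots,1)=x_k$, and $n$-increasing). $b_{i,m}(t)=\binom{m}{i}t^i(1-t)^{m-i}$ and $\mathscr{B}^n_m(C)(x_1,\ldots,x_n)=\sum_{i_1,\ldots,i_n=0}^m C(\tfrac{i_1}{m},\ldots,\tfrac{i_n}{m})\,b_{i_1,m}(x_1)\cdots b_{i_n,m}(x_n)$. *)

theory Defs
  imports "HOL-Probability.Probability"
begin

text \<open>Points of I^n are represented as extensional functions on the index set {..<n}
  (coordinate r corresponds to x_(r+1) of the paper).\<close>

definition cube :: "nat \<Rightarrow> (nat \<Rightarrow> real) set" where
  "cube n = PiE {..<n} (\<lambda>_. {0..1})"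

definition is_copula :: "nat \<Rightarrow> ((nat \<Rightarrow> real) \<Rightarrow> real) \<Rightarrow> bool" where
  "is_copula n C \<longleftrightarrow>
     (\<forall>x\<in>cube n. C x \<in> {0..1}) \<and>
     (\<forall>x\<in>cube n. (\<exists>r<n. x r = 0) \<longrightarrow> C x = 0) \<and>
     (\<forall>r<n. \<forall>t\<in>{0..1}. C (\<lambda>s\<in>{..<n}. if s = r then t else 1) = t) \<and>
     (\<forall>a\<in>cube n. \<forall>b\<in>cube n. (\<forall>r<n. a r \<le> b r) \<longrightarrow>
        0 \<le> (\<Sum>\<epsilon>\<in>PiE {..<n} (\<lambda>_. UNIV :: bool set).
               (-1::real) ^ card {r\<in>{..<n}. \<not> \<epsilon> r} *
               C (\<lambda>r\<in>{..<n}. if \<epsilon> r then b r else a r)))"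

definition bern :: "nat \<Rightarrow> nat \<Rightarrow> real \<Rightarrow> real" where
  "bern i m t = real (m choose i) * t ^ i * (1 - t) ^ (m - i)"

definition bernstein_copula ::
  "nat \<Rightarrow> nat \<Rightarrow> ((nat \<Rightarrow> real) \<Rightarrow> real) \<Rightarrow> (nat \<Rightarrow> real) \<Rightarrow> real" where
  "bernstein_copula n m C x =
     (\<Sum>i\<in>PiE {..<n} (\<lambda>_. {0..m}).
        C (\<lambda>r\<in>{..<n}. real (i r) / real m) * (\<Prod>r<n. bern (i r) m (x r)))"

definition order_stat :: "nat \<Rightarrow> (nat \<Rightarrow> real) \<Rightarrow> nat \<Rightarrow> real" where
  "order_stat m xs k = sort (map xs [1..<m+1]) ! (k - 1)"

end

theory Submission
  imports Defs
begin


lemma sorted_nth_less_filter: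
  fixes L :: "real list"
  assumes "sorted L" "i < length L"
  shows "L ! i < t \<longleftrightarrow> i < length (filter (\<lambda>y. y < t) L)"
  using assms
proof (induction L arbitrary: i)
  case Nil then show ?case by simp
next
  case (Cons a L)
  show ?case
  proof (cases "a < t")
    case True
    then show ?thesis using Cons by (cases i) auto
  next
    case False
    have "\<forall>y\<in>set L. \<not> y < t" using Cons.prems(1) False by auto
    then have "filter (\<lambda>y. y < t) (a # L) = []" using False by auto
    moreover have "(a # L) ! i \<in> set (a # L)" using Cons.prems(2) by (rule nth_mem)
    then have "a \<le> (a # L) ! i" using Cons.prems(1) by auto
    ultimately show ?thesis using False by auto
  qed
qed

lemma order_stat_less:
  assumes "1 \<le> k" "k \<le> m"
  shows "order_stat m xs k < t \<longleftrightarrow> k \<le> card {j\<in>{1..m}. xs j < t}"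
proof -
  let ?L = "sort (map xs [1..<m+1])"
  have len: "length ?L = m" by simp
  have "order_stat m xs k < t \<longleftrightarrow> k - 1 < length (filter (\<lambda>y. y < t) ?L)"
    unfolding order_stat_def using assms by (intro sorted_nth_less_filter) auto
  also have "length (filter (\<lambda>y. y < t) ?L) = length (filter (\<lambda>y. y < t) (map xs [1..<m+1]))"
    by (simp add: filter_sort)
  also have "\<dots> = length (filter (\<lambda>j. xs j < t) [1..<m+1])"
    by (simp add: filter_map o_def)
  also have "\<dots> = card (set (filter (\<lambda>j. xs j < t) [1..<m+1]))"
    by (metis distinct_card distinct_filter distinct_upt)
  also have "set (filter (\<lambda>j. xs j < t) [1..<m+1]) = {j\<in>{1..m}. xs j < t}"
    by auto
  finally show ?thesis using assms by auto
qed

lemma ceil_box: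
  fixes t :: real
  assumes "m \<ge> 1" "0 \<le> t" "t \<le> 1" "\<forall>j\<le>m. t \<noteq> real j / real m"
  shows "\<exists>k\<in>{1..m}. (real k - 1) / real m < t \<and> t < real k / real m"
proof -
  define c where "c = t * real m"
  have mpos: "real m > 0" using assms by simp
  have c0: "c \<ge> 0" using assms c_def by simp
  have cnint: "c \<noteq> of_int \<lceil>c\<rceil>"
  proof
    assume h: "c = of_int \<lceil>c\<rceil>"
    have "0 \<le> \<lceil>c\<rceil>" using c0 le_of_int_ceiling[of c] by linarith
    moreover have "\<lceil>c\<rceil> \<le> int m" using assms mpos c_def
      by (simp add: ceiling_le_iff mult_le_cancel_right1)
    ultimately have "nat \<lceil>c\<rceil> \<le> m" "real (nat \<lceil>c\<rceil>) = c" using h by auto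
    then have "t = real (nat \<lceil>c\<rceil>) / real m" using mpos c_def by simp
    then show False using assms(4) \<open>nat \<lceil>c\<rceil> \<le> m\<close> by blast
  qed
  have c1: "c < of_int \<lceil>c\<rceil>" using cnint le_of_int_ceiling[of c] by linarith
  have c2: "of_int \<lceil>c\<rceil> < c + 1" by linarith
  have "t \<noteq> 0" using assms(4) by (metis div_0 le0 of_nat_0)
  then have "c > 0" using assms c_def mpos by simp
  then have ge1: "\<lceil>c\<rceil> \<ge> 1" using c1 by (simp add: c1)
  have "c \<le> real m" using assms mpos c_def by (simp add: mult_le_cancel_right1)
  then have lem: "\<lceil>c\<rceil> \<le> int m" by (simp add: ceiling_le_iff)
  define k where "k = nat \<lceil>c\<rceil>"
  have rk: "real k = of_int \<lceil>c\<rceil>" using ge1 k_def by simp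
  show ?thesis
  proof (intro bexI conjI)
    show "(real k - 1) / real m < t" using c2 rk mpos c_def by (simp add: divide_less_eq)
    show "t < real k / real m" using c1 rk mpos c_def by (simp add: less_divide_eq)
    have "int k = \<lceil>c\<rceil>" using ge1 k_def by simp
    then show "k \<in> {1..m}" using ge1 lem by simp linarith
  qed
qed

lemma prod_if_card:
  assumes "T \<subseteq> {1..m}"
  shows "(\<Prod>j\<in>{1..m}. if j \<in> T then (t::real) else 1 - t) = t ^ card T * (1 - t) ^ (m - card T)"
proof -
  have "(\<Prod>j\<in>{1..m}. if j \<in> T then t else 1 - t) =
     (\<Prod>j\<in>{1..m} \<inter> {j. j \<in> T}. t) * (\<Prod>j\<in>{1..m} \<inter> - {j. j \<in> T}. 1 - t)"
    by (rule prod.If_cases) simp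
  also have "{1..m} \<inter> {j. j \<in> T} = T" using assms by auto
  also have "card ({1..m} \<inter> - {j. j \<in> T}) = m - card T"
  proof -
    have "{1..m} \<inter> - {j. j \<in> T} = {1..m} - T" by auto
    then show ?thesis using assms by (simp add: card_Diff_subset finite_subset)
  qed
  then have "(\<Prod>j\<in>{1..m} \<inter> - {j. j \<in> T}. 1 - t) = (1 - t) ^ (m - card T)" by simp
  finally show ?thesis by simp
qed

lemma sum_subsets_card:
  assumes "k \<le> m"
  shows "(\<Sum>T\<in>{T. T \<subseteq> {1..m} \<and> k \<le> card T}. (t::real) ^ card T * (1 - t) ^ (m - card T))
         = (\<Sum>i=k..m. bern i m t)"
proof -
  have eq: "{T. T \<subseteq> {1..m} \<and> k \<le> card T} = (\<Union>i\<in>{k..m}. {T. T \<subseteq> {1..m} \<and> card T = i})"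
  proof (intro set_eqI iffI)
    fix T assume "T \<in> {T. T \<subseteq> {1..m} \<and> k \<le> card T}"
    moreover then have "card T \<le> m" using card_mono[of "{1..m}" T] by auto
    ultimately show "T \<in> (\<Union>i\<in>{k..m}. {T. T \<subseteq> {1..m} \<and> card T = i})" by auto
  qed auto
  have "(\<Sum>T\<in>{T. T \<subseteq> {1..m} \<and> k \<le> card T}. t ^ card T * (1 - t) ^ (m - card T))
     = (\<Sum>i\<in>{k..m}. \<Sum>T\<in>{T. T \<subseteq> {1..m} \<and> card T = i}. t ^ card T * (1 - t) ^ (m - card T))"
    unfolding eq
    by (rule sum.UNION_disjoint) (auto simp: finite_subset)
  also have "\<dots> = (\<Sum>i\<in>{k..m}. real (m choose i) * (t ^ i * (1 - t) ^ (m - i)))"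
  proof (rule sum.cong)
    fix i assume "i \<in> {k..m}"
    have "(\<Sum>T\<in>{T. T \<subseteq> {1..m} \<and> card T = i}. t ^ card T * (1 - t) ^ (m - card T))
        = (\<Sum>T\<in>{T. T \<subseteq> {1..m} \<and> card T = i}. t ^ i * (1 - t) ^ (m - i))"
      by (rule sum.cong) auto
    also have "\<dots> = real (card {T. T \<subseteq> {1..m} \<and> card T = i}) * (t ^ i * (1 - t) ^ (m - i))"
      by simp
    also have "card {T. T \<subseteq> {1..m} \<and> card T = i} = m choose i"
      using n_subsets[of "{1..m}" i] by simp
    finally show "(\<Sum>T\<in>{T. T \<subseteq> {1..m} \<and> card T = i}. t ^ card T * (1 - t) ^ (m - card T)) =
        real (m choose i) * (t ^ i * (1 - t) ^ (m - i))" .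
  qed simp
  finally show ?thesis by (simp add: bern_def mult.assoc)
qed

lemma sets_Collect_all_less:
  fixes n :: nat
  assumes "\<And>r. r < n \<Longrightarrow> {\<omega>\<in>space M. P r \<omega>} \<in> sets M"
  shows "{\<omega>\<in>space M. \<forall>r<n. P r \<omega>} \<in> sets M"
proof -
  have "{\<omega>\<in>space M. \<forall>r<n. P r \<omega>} = {\<omega>\<in>space M. \<forall>r\<in>{..<n}. P r \<omega>}" by auto
  moreover have "{\<omega>\<in>space M. \<forall>r\<in>{..<n}. P r \<omega>} \<in> sets M"
    by (rule sets.sets_Collect_finite_All) (auto intro: assms)
  ultimately show ?thesis by metis
qed

lemma meas_open_iv:
  assumes [measurable]: "(f :: 'a \<Rightarrow> real) \<in> borel_measurable M"
  shows "{\<omega>\<in>space M. a < f \<omega> \<and> f \<omega> < b} \<in> sets M"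
  by measurable

lemma meas_le:
  assumes [measurable]: "(f :: 'a \<Rightarrow> real) \<in> borel_measurable M"
  shows "{\<omega>\<in>space M. f \<omega> \<le> c} \<in> sets M"
  by measurable

lemma meas_eq:
  assumes [measurable]: "(f :: 'a \<Rightarrow> real) \<in> borel_measurable M"
  shows "{\<omega>\<in>space M. f \<omega> = c} \<in> sets M"
  by measurable

lemma meas_out:
  assumes [measurable]: "(f :: 'a \<Rightarrow> real) \<in> borel_measurable M"
  shows "{\<omega>\<in>space M. f \<omega> < 0 \<or> 1 < f \<omega>} \<in> sets M"
  by measurable

lemma meas_cnt:
  assumes [measurable]: "\<And>j. j \<in> S \<Longrightarrow> (g j :: 'a \<Rightarrow> real) \<in> borel_measurable M" and "finite S"
  shows "{\<omega>\<in>space M. c \<le> (\<Sum>j\<in>S. indicator {..<t} (g j \<omega>) :: real)} \<in> sets M"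
proof -
  have "(\<lambda>\<omega>. \<Sum>j\<in>S. indicator {..<t} (g j \<omega>) :: real) \<in> borel_measurable M"
  proof (rule borel_measurable_sum)
    fix j assume [measurable]: "j \<in> S"
    show "(\<lambda>\<omega>. indicator {..<t} (g j \<omega>) :: real) \<in> borel_measurable M" by measurable
  qed
  then show ?thesis by measurable
qed

lemma null_of_measure0:
  assumes "prob_space M" "A \<in> sets M" "measure M A = 0"
  shows "A \<in> null_sets M"
proof -
  interpret prob_space M by fact
  show ?thesis using assms(2,3) by (intro null_setsI) (simp add: emeasure_eq_measure)
qed

lemma card_eq_sum_indicator:
  "finite S \<Longrightarrow> real (card {j\<in>S. f j < t}) = (\<Sum>j\<in>S. indicator {..<t} (f j))"
  by (simp add: indicator_def sum.inter_filter[symmetric] Int_def)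

lemma unif_prob:
  assumes d: "distr M lborel f = uniform_measure lborel {0..1::real}" and f: "f \<in> borel_measurable M"
    and S: "S \<in> sets borel"
  shows "measure M (f -` S \<inter> space M) = measure lborel ({0..1} \<inter> S)"
proof -
  have "measure M (f -` S \<inter> space M) = measure (distr M lborel f) S"
    using f S by (intro measure_distr[symmetric]) auto
  also have "\<dots> = measure lborel ({0..1} \<inter> S) / measure lborel {0..1::real}"
    unfolding d using S by (intro measure_uniform_measure) auto
  finally show ?thesis by simp
qed

lemma unif_less:
  assumes d: "distr M lborel f = uniform_measure lborel {0..1::real}" and f: "f \<in> borel_measurable M"
    and t: "0 \<le> t" "t \<le> 1"
  shows "measure M (f -` {..<t} \<inter> space M) = t"
proof -
  have "{0..1} \<inter> {..<t} = {0..<t}" using t by auto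
  then show ?thesis using unif_prob[OF d f, of "{..<t}"] t by simp
qed

lemma unif_ge:
  assumes d: "distr M lborel f = uniform_measure lborel {0..1::real}" and f: "f \<in> borel_measurable M"
    and t: "0 \<le> t" "t \<le> 1"
  shows "measure M (f -` {t..} \<inter> space M) = 1 - t"
proof -
  have "{0..1} \<inter> {t..} = {t..1}" using t by auto
  then show ?thesis using unif_prob[OF d f, of "{t..}"] t by simp
qed

lemma collect_eq_iff:
  "T \<subseteq> A \<Longrightarrow> ({j\<in>A. P j} = T) \<longleftrightarrow> (\<forall>j\<in>A. P j \<longleftrightarrow> j \<in> T)"
  by auto



theorem mainTheorem9:
  fixes n m :: nat
    and C :: "(nat \<Rightarrow> real) \<Rightarrow> real"
    and M :: "'a measure"
    and X :: "nat \<Rightarrow> 'a \<Rightarrow> real"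
    and XX :: "nat \<Rightarrow> nat \<Rightarrow> 'a \<Rightarrow> real"
  defines "J \<equiv> {..<n} \<times> {1..m}"
  defines "E \<equiv> (\<lambda>k. {\<omega>\<in>space M. \<forall>r<n.
              (real (k r) - 1) / real m < X r \<omega> \<and> X r \<omega> < real (k r) / real m})"
  defines "Y \<equiv> (\<lambda>r \<omega>. \<Sum>k\<in>PiE {..<n} (\<lambda>_. {1..m}).
              indicator (E k) \<omega> * order_stat m (\<lambda>j. XX r j \<omega>) (k r))"
  assumes "n \<ge> 2" and "m \<ge> 1"
    and "is_copula n C"
    and "prob_space M"
    and "\<And>r. r < n \<Longrightarrow> X r \<in> borel_measurable M"
    and "\<And>x. x \<in> cube n \<Longrightarrow> C x = measure M {\<omega>\<in>space M. \<forall>r<n. X r \<omega> \<le> x r}"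
    and "\<And>r j. (r, j) \<in> J \<Longrightarrow> XX r j \<in> borel_measurable M"
    and "\<And>r j. (r, j) \<in> J \<Longrightarrow> distr M lborel (XX r j) = uniform_measure lborel {0..1}"
    and "prob_space.indep_vars M (\<lambda>_. borel) (\<lambda>p. XX (fst p) (snd p)) J"
    and "\<And>A B. A \<in> sets (PiM {..<n} (\<lambda>_. borel)) \<Longrightarrow> B \<in> sets (PiM J (\<lambda>_. borel)) \<Longrightarrow>
          measure M ({\<omega>\<in>space M. (\<lambda>r\<in>{..<n}. X r \<omega>) \<in> A} \<inter>
                     {\<omega>\<in>space M. (\<lambda>p\<in>J. XX (fst p) (snd p) \<omega>) \<in> B})
          = measure M {\<omega>\<in>space M. (\<lambda>r\<in>{..<n}. X r \<omega>) \<in> A} *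
            measure M {\<omega>\<in>space M. (\<lambda>p\<in>J. XX (fst p) (snd p) \<omega>) \<in> B}"
  shows "\<forall>x\<in>cube n. bernstein_copula n m C x = measure M {\<omega>\<in>space M. \<forall>r<n. Y r \<omega> < x r}"
proof
  fix x assume x: "x \<in> cube n"
  interpret P: prob_space M by fact
  define K where "K = PiE {..<n} (\<lambda>_. {1..m::nat})"
  define G where "G = (\<Union>k\<in>K. E k)"
  define cnt where "cnt = (\<lambda>r \<omega>. card {j\<in>{1..m}. XX r j \<omega> < x r})"
  define F where "F = (\<lambda>k. {\<omega>\<in>space M. \<forall>r<n. k r \<le> cnt r \<omega>})"
  define bT where "bT = (\<lambda>k t. \<Sum>i=k..m. bern i m t)"
  have xr: "\<And>r. r < n \<Longrightarrow> 0 \<le> x r \<and> x r \<le> 1" using x by (auto simp: cube_def PiE_iff)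
  have cop_ground: "\<forall>x\<in>cube n. (\<exists>r<n. x r = 0) \<longrightarrow> C x = 0"
    using assms(6) unfolding is_copula_def by (rule conjunct1[OF conjunct2])
  have cop_margin: "\<forall>r<n. \<forall>t\<in>{0..1}. C (\<lambda>s\<in>{..<n}. if s = r then t else 1) = t"
    using assms(6) unfolding is_copula_def by (rule conjunct1[OF conjunct2[OF conjunct2]])
  have finK: "finite K" unfolding K_def by (simp add: finite_PiE)
  have mpos: "real m > 0" using assms(5) by simp
  have Xm: "\<And>r. r < n \<Longrightarrow> X r \<in> borel_measurable M" by fact
  have Emeas: "\<And>k. E k \<in> sets M"
    unfolding E_def by (rule sets_Collect_all_less) (rule meas_open_iv[OF Xm])
  have Gmeas: "G \<in> sets M" unfolding G_def using finK Emeas by auto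
  have Esp: "\<And>k. E k \<subseteq> space M" unfolding E_def by auto
  have Euniq: "\<And>k k' \<omega>. k\<in>K \<Longrightarrow> k'\<in>K \<Longrightarrow> \<omega>\<in>E k \<Longrightarrow> \<omega> \<in> E k' \<Longrightarrow> k = k'"
  proof -
    fix k k' \<omega> assume k: "k\<in>K" and k': "k'\<in>K" and e: "\<omega>\<in>E k" and e': "\<omega> \<in> E k'"
    show "k = k'"
    proof (rule PiE_ext[OF k[unfolded K_def] k'[unfolded K_def]])
      fix r assume "r \<in> {..<n}"
      then have "r < n" by simp
      then have a: "(real (k r) - 1) / real m < X r \<omega>" "X r \<omega> < real (k r) / real m"
        and b: "(real (k' r) - 1) / real m < X r \<omega>" "X r \<omega> < real (k' r) / real m"
        using e e' unfolding E_def by auto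
      have "(real (k r) - 1) / real m < real (k' r) / real m" using a b by linarith
      then have "real (k r) - 1 < real (k' r)" using mpos by (simp add: divide_less_cancel)
      moreover have "(real (k' r) - 1) / real m < real (k r) / real m" using a b by linarith
      then have "real (k' r) - 1 < real (k r)" using mpos by (simp add: divide_less_cancel)
      ultimately show "k r = k' r" by linarith
    qed
  qed
  have Gnull: "space M - G \<in> null_sets M"
  proof -
    define D where "D = (\<lambda>r t. {\<omega>\<in>space M. \<forall>s<n. X s \<omega> \<le> (if s = r then t else 1)})"
    have Dmeas: "\<And>r t. D r t \<in> sets M"
      unfolding D_def by (rule sets_Collect_all_less) (rule meas_le[OF Xm])
    have Dval: "\<And>r t. r < n \<Longrightarrow> t \<in> {0..1} \<Longrightarrow> measure M (D r t) = t"
    proof -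
      fix r and t :: real assume r: "r < n" and t: "t \<in> {0..1}"
      define u where "u = (\<lambda>s\<in>{..<n}. if s = r then t else (1::real))"
      have "u \<in> cube n" using t unfolding u_def cube_def by (auto simp: PiE_iff)
      then have "C u = measure M {\<omega>\<in>space M. \<forall>s<n. X s \<omega> \<le> u s}" using assms(9) by blast
      also have "{\<omega>\<in>space M. \<forall>s<n. X s \<omega> \<le> u s} = D r t" unfolding u_def D_def by auto
      moreover have "C u = t" using cop_margin r t unfolding u_def by blast
      ultimately show "measure M (D r t) = t" by simp
    qed
    have n0: "0 < n" using assms(4) by simp
    define Q where "Q = space M - D 0 1"
    have Qmeas: "Q \<in> sets M" unfolding Q_def using Dmeas by auto
    have Q0: "measure M Q = 0"
      unfolding Q_def using P.prob_compl[OF Dmeas[of 0 1]] Dval[OF n0, of 1] by simp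
    have DQ: "\<And>r \<omega>. r < n \<Longrightarrow> \<omega> \<in> space M \<Longrightarrow> \<omega> \<notin> Q \<Longrightarrow> X r \<omega> \<le> 1"
      unfolding Q_def D_def by auto
    define N1 where "N1 = (\<lambda>r. {\<omega>\<in>space M. X r \<omega> < 0 \<or> 1 < X r \<omega>})"
    define N2 where "N2 = (\<lambda>r c. {\<omega>\<in>space M. X r \<omega> = c})"
    have N1null: "\<And>r. r < n \<Longrightarrow> N1 r \<in> null_sets M"
    proof -
      fix r assume r: "r < n"
      have sub: "N1 r \<subseteq> D r 0 \<union> Q"
      proof
        fix \<omega> assume w: "\<omega> \<in> N1 r"
        show "\<omega> \<in> D r 0 \<union> Q"
        proof (cases "\<omega> \<in> Q")
          case False
          then have "\<forall>s<n. X s \<omega> \<le> 1" using DQ w unfolding N1_def by auto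
          moreover have "X r \<omega> < 0" using DQ[OF r _ False] w unfolding N1_def by force
          ultimately show ?thesis using w unfolding D_def N1_def by auto
        qed simp
      qed
      have "measure M (N1 r) \<le> measure M (D r 0 \<union> Q)"
        using sub Dmeas Qmeas by (intro P.finite_measure_mono) auto
      also have "\<dots> \<le> measure M (D r 0) + measure M Q" using Dmeas Qmeas by (rule measure_Un_le)
      also have "\<dots> = 0" using Dval[OF r, of 0] Q0 by simp
      finally have "measure M (N1 r) = 0" by (simp add: measure_le_0_iff)
      moreover have "N1 r \<in> sets M" unfolding N1_def by (rule meas_out[OF Xm[OF r]])
      ultimately show "N1 r \<in> null_sets M" using assms(7) null_of_measure0 by blast
    qed
    have N2null: "\<And>r (c::real). r < n \<Longrightarrow> c \<in> {0..1} \<Longrightarrow> N2 r c \<in> null_sets M"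
    proof -
      fix r and c :: real assume r: "r < n" and c: "c \<in> {0..1}"
      have N2m: "N2 r c \<in> sets M" unfolding N2_def by (rule meas_eq[OF Xm[OF r]])
      have bound: "measure M (N2 r c) \<le> d" if d: "0 < d" "d \<le> c" for d
      proof -
        have sub: "N2 r c \<subseteq> (D r c - D r (c - d)) \<union> Q"
        proof
          fix \<omega> assume w: "\<omega> \<in> N2 r c"
          show "\<omega> \<in> (D r c - D r (c - d)) \<union> Q"
          proof (cases "\<omega> \<in> Q")
            case False
            then have "\<forall>s<n. X s \<omega> \<le> 1" using DQ w unfolding N2_def by auto
            then show ?thesis using w d r c unfolding D_def N2_def by auto
          qed simp
        qed
        have DD: "D r (c - d) \<subseteq> D r c" unfolding D_def using d by auto
        have "measure M (N2 r c) \<le> measure M ((D r c - D r (c - d)) \<union> Q)"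
          using sub Dmeas Qmeas by (intro P.finite_measure_mono) auto
        also have "\<dots> \<le> measure M (D r c - D r (c - d)) + measure M Q"
          using Dmeas Qmeas by (intro measure_Un_le) auto
        also have "\<dots> = d"
          using P.finite_measure_Diff[OF Dmeas Dmeas DD] Dval[OF r, of c] Dval[OF r, of "c - d"] Q0 c d
          by simp
        finally show ?thesis .
      qed
      have "measure M (N2 r c) = 0"
      proof (cases "c = 0")
        case True
        have sub: "N2 r c \<subseteq> D r 0 \<union> Q"
        proof
          fix \<omega> assume w: "\<omega> \<in> N2 r c"
          show "\<omega> \<in> D r 0 \<union> Q"
          proof (cases "\<omega> \<in> Q")
            case False
            then have "\<forall>s<n. X s \<omega> \<le> 1" using DQ w unfolding N2_def by auto
            then show ?thesis using w True unfolding D_def N2_def by auto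
          qed simp
        qed
        have "measure M (N2 r c) \<le> measure M (D r 0 \<union> Q)"
          using sub Dmeas Qmeas by (intro P.finite_measure_mono) auto
        also have "\<dots> \<le> measure M (D r 0) + measure M Q" using Dmeas Qmeas by (rule measure_Un_le)
        also have "\<dots> = 0" using Dval[OF r, of 0] Q0 by simp
        finally show ?thesis by (simp add: measure_le_0_iff)
      next
        case False
        then have cpos: "c > 0" using c by simp
        show ?thesis
        proof (rule ccontr)
          assume ne: "measure M (N2 r c) \<noteq> 0"
          then have apos: "measure M (N2 r c) > 0" using measure_nonneg[of M "N2 r c"] by linarith
          have "measure M (N2 r c) \<le> min c (measure M (N2 r c) / 2)"
            using apos cpos by (intro bound) auto
          then show False using apos by linarith
        qed
      qed
      then show "N2 r c \<in> null_sets M" using N2m assms(7) null_of_measure0 by blast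
    qed
    define N where "N = (\<Union>r\<in>{..<n}. N1 r \<union> (\<Union>j\<in>{..m}. N2 r (real j / real m)))"
    have Nnull: "N \<in> null_sets M"
      unfolding N_def
    proof (intro null_sets.finite_UN null_sets.Un)
      fix r j assume r: "r \<in> {..<n}" and j: "j \<in> {..m}"
      show "N2 r (real j / real m) \<in> null_sets M" using r j mpos by (intro N2null) auto
    qed (auto intro: N1null)
    have "space M - G \<subseteq> N"
    proof
      fix \<omega> assume w: "\<omega> \<in> space M - G"
      show "\<omega> \<in> N"
      proof (rule ccontr)
        assume nN: "\<omega> \<notin> N"
        have "\<forall>r\<in>{..<n}. \<exists>kr\<in>{1..m}. (real kr - 1) / real m < X r \<omega> \<and> X r \<omega> < real kr / real m"
        proof
          fix r assume r: "r \<in> {..<n}"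
          have "\<omega> \<notin> N1 r" "\<And>j. j \<le> m \<Longrightarrow> \<omega> \<notin> N2 r (real j / real m)" using nN r unfolding N_def by auto
          then show "\<exists>kr\<in>{1..m}. (real kr - 1) / real m < X r \<omega> \<and> X r \<omega> < real kr / real m"
            using w assms(5) unfolding N1_def N2_def by (intro ceil_box) auto
        qed
        then obtain k where k: "k \<in> K" and kk: "\<forall>r\<in>{..<n}. (real (k r) - 1) / real m < X r \<omega> \<and> X r \<omega> < real (k r) / real m"
          unfolding K_def PiE_choice by blast
        then have "\<omega> \<in> E k" using w unfolding E_def by auto
        then show False using k w unfolding G_def by auto
      qed
    qed
    then show ?thesis using Nnull Gmeas by (intro null_sets_subset[OF Nnull]) auto
  qed
  have XXm: "\<And>r j. r < n \<Longrightarrow> j \<in> {1..m} \<Longrightarrow> XX r j \<in> borel_measurable M"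
    using assms(10) unfolding J_def by auto
  have cnt_sum: "\<And>r \<omega>. real (cnt r \<omega>) = (\<Sum>j\<in>{1..m}. indicator {..<x r} (XX r j \<omega>))"
    unfolding cnt_def by (rule card_eq_sum_indicator) simp
  have Fmeas: "\<And>k. F k \<in> sets M"
  proof -
    fix k
    have "F k = {\<omega>\<in>space M. \<forall>r<n. real (k r) \<le> (\<Sum>j\<in>{1..m}. indicator {..<x r} (XX r j \<omega>))}"
      unfolding F_def by (simp only: cnt_sum[symmetric] of_nat_le_iff)
    also have "\<dots> \<in> sets M"
      by (rule sets_Collect_all_less, rule meas_cnt) (auto intro: XXm)
    finally show "F k \<in> sets M" .
  qed
  have EF: "\<And>k. k\<in>K \<Longrightarrow> measure M (E k \<inter> F k) = measure M (E k) * measure M (F k)"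
  proof -
    fix k assume k: "k \<in> K"
    define A where "A = PiE {..<n} (\<lambda>r. {(real (k r) - 1)/real m <..< real (k r)/real m})"
    define B where "B = {z \<in> space (PiM J (\<lambda>_. borel)). \<forall>r<n. real (k r) \<le> (\<Sum>j\<in>{1..m}. indicator {..<x r} (z (r,j)) :: real)}"
    have Am: "A \<in> sets (PiM {..<n} (\<lambda>_. borel))" unfolding A_def by (rule sets_PiM_I_finite) auto
    have Bm: "B \<in> sets (PiM J (\<lambda>_. borel))" unfolding B_def
    proof (rule sets_Collect_all_less)
      fix r assume r: "r < n"
      have "\<And>j. j \<in> {1..m} \<Longrightarrow> (\<lambda>z. z (r, j)) \<in> borel_measurable (PiM J (\<lambda>_. borel))"
        using r by (intro measurable_component_singleton) (simp add: J_def)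
      then show "{z \<in> space (PiM J (\<lambda>_. borel)). real (k r) \<le> (\<Sum>j\<in>{1..m}. indicator {..<x r} (z (r,j)) :: real)}
          \<in> sets (PiM J (\<lambda>_. borel))"
        by (intro meas_cnt[where g="\<lambda>j z. z (r, j)"]) auto
    qed
    have EA: "{\<omega>\<in>space M. (\<lambda>r\<in>{..<n}. X r \<omega>) \<in> A} = E k"
      unfolding A_def E_def by (auto simp: PiE_iff)
    have FB: "{\<omega>\<in>space M. (\<lambda>p\<in>J. XX (fst p) (snd p) \<omega>) \<in> B} = F k"
    proof -
      have "\<And>\<omega>. (\<lambda>p\<in>J. XX (fst p) (snd p) \<omega>) \<in> B \<longleftrightarrow> (\<forall>r<n. k r \<le> cnt r \<omega>)"
      proof -
        fix \<omega>
        have sp: "(\<lambda>p\<in>J. XX (fst p) (snd p) \<omega>) \<in> space (PiM J (\<lambda>_. borel))"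
          by (simp add: space_PiM)
        have "\<And>r. r < n \<Longrightarrow> (\<Sum>j\<in>{1..m}. indicator {..<x r} ((\<lambda>p\<in>J. XX (fst p) (snd p) \<omega>) (r,j)) :: real)
              = real (cnt r \<omega>)"
          unfolding cnt_sum by (rule sum.cong) (auto simp: J_def)
        then show "(\<lambda>p\<in>J. XX (fst p) (snd p) \<omega>) \<in> B \<longleftrightarrow> (\<forall>r<n. k r \<le> cnt r \<omega>)"
          using sp unfolding B_def by simp
      qed
      then show ?thesis unfolding F_def by simp
    qed
    show "measure M (E k \<inter> F k) = measure M (E k) * measure M (F k)"
      using assms(13)[OF Am Bm] unfolding EA FB .
  qed
  have Jne: "J \<noteq> {}"
  proof -
    have "(0, 1) \<in> J" using assms(4,5) unfolding J_def by auto
    then show ?thesis by blast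
  qed
  have finJ: "finite J" unfolding J_def by simp
  have indep: "P.indep_sets (\<lambda>p. {XX (fst p) (snd p) -` A \<inter> space M | A. A \<in> sets borel}) J"
    using assms(12) unfolding P.indep_vars_def2 by simp
  have Fval: "\<And>k. k\<in>K \<Longrightarrow> measure M (F k) = (\<Prod>r<n. bT (k r) (x r))"
  proof -
    fix k assume k: "k \<in> K"
    define SS where "SS = PiE {..<n} (\<lambda>r. {T. T \<subseteq> {1..m} \<and> k r \<le> card T})"
    define A where "A = (\<lambda>S::nat \<Rightarrow> nat set. {\<omega>\<in>space M. \<forall>r<n. {j\<in>{1..m}. XX r j \<omega> < x r} = S r})"
    define Bs where "Bs = (\<lambda>(S::nat \<Rightarrow> nat set) (p::nat\<times>nat). if snd p \<in> S (fst p) then {..<x (fst p)} else {x (fst p)..})"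
    define g where "g = (\<lambda>r (T::nat set). x r ^ card T * (1 - x r) ^ (m - card T))"
    have finT: "\<And>r. finite {T. T \<subseteq> {1..m} \<and> k r \<le> card T}"
      by (rule finite_subset[of _ "Pow {1..m}"]) auto
    have finSS: "finite SS" unfolding SS_def using finT by (intro finite_PiE) auto
    have Fdec: "F k = (\<Union>S\<in>SS. A S)"
    proof (intro set_eqI iffI)
      fix \<omega> assume w: "\<omega> \<in> F k"
      define S where "S = (\<lambda>r\<in>{..<n}. {j\<in>{1..m}. XX r j \<omega> < x r})"
      have "S \<in> SS" unfolding SS_def S_def restrict_PiE_iff
      proof
        fix r assume "r \<in> {..<n}"
        then show "{j\<in>{1..m}. XX r j \<omega> < x r} \<in> {T. T \<subseteq> {1..m} \<and> k r \<le> card T}"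
          using w unfolding F_def cnt_def by auto
      qed
      moreover have "\<omega> \<in> A S" using w unfolding A_def S_def F_def by auto
      ultimately show "\<omega> \<in> (\<Union>S\<in>SS. A S)" by blast
    next
      fix \<omega> assume "\<omega> \<in> (\<Union>S\<in>SS. A S)"
      then obtain S where S: "S \<in> SS" "\<omega> \<in> A S" by blast
      have "\<forall>r<n. k r \<le> cnt r \<omega>"
      proof (intro allI impI)
        fix r assume r: "r < n"
        have "S r \<in> {T. T \<subseteq> {1..m} \<and> k r \<le> card T}" using S(1) r unfolding SS_def by (auto dest: PiE_mem)
        moreover have "{j\<in>{1..m}. XX r j \<omega> < x r} = S r" using S(2) r unfolding A_def by auto
        ultimately show "k r \<le> cnt r \<omega>" unfolding cnt_def by simp
      qed
      then show "\<omega> \<in> F k" using S(2) unfolding A_def F_def by auto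
    qed
    have Adisj: "disjoint_family_on A SS"
      unfolding disjoint_family_on_def
    proof (intro ballI impI)
      fix S S' assume S: "S \<in> SS" and S': "S' \<in> SS" and ne: "S \<noteq> S'"
      show "A S \<inter> A S' = {}"
      proof (rule ccontr)
        assume "A S \<inter> A S' \<noteq> {}"
        then obtain \<omega> where "\<omega> \<in> A S" "\<omega> \<in> A S'" by blast
        then have "\<And>r. r \<in> {..<n} \<Longrightarrow> S r = S' r" unfolding A_def by auto
        then have "S = S'" using S S' unfolding SS_def by (intro PiE_ext) auto
        then show False using ne by simp
      qed
    qed
    have Bsm: "\<And>S p. Bs S p \<in> sets borel"
    proof -
      fix S p
      show "Bs S p \<in> sets borel" unfolding Bs_def case_prod_unfold by simp
    qed
    have memBs: "\<And>S r j (y::real). y \<in> Bs S (r, j) \<longleftrightarrow> (y < x r \<longleftrightarrow> j \<in> S r)"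
      unfolding Bs_def by auto
    have ballJ: "\<And>P. (\<forall>p\<in>J. P p) \<longleftrightarrow> (\<forall>r<n. \<forall>j\<in>{1..m}. P (r,j))"
      unfolding J_def by auto
    have Aeq: "\<And>S. S \<in> SS \<Longrightarrow> A S = (\<Inter>p\<in>J. XX (fst p) (snd p) -` Bs S p \<inter> space M)"
    proof -
      fix S assume S: "S \<in> SS"
      have sub: "\<And>r. r < n \<Longrightarrow> S r \<subseteq> {1..m}" using S unfolding SS_def by (auto dest: PiE_mem)
      have key: "\<And>\<omega>. (\<forall>r<n. {j\<in>{1..m}. XX r j \<omega> < x r} = S r) \<longleftrightarrow>
              (\<forall>p\<in>J. XX (fst p) (snd p) \<omega> \<in> Bs S p)"
      proof -
        fix \<omega>
        have "(\<forall>r<n. {j\<in>{1..m}. XX r j \<omega> < x r} = S r) \<longleftrightarrow>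
              (\<forall>r<n. \<forall>j\<in>{1..m}. XX r j \<omega> < x r \<longleftrightarrow> j \<in> S r)"
        proof (intro all_cong1 imp_cong refl)
          fix r assume "r < n"
          then show "({j\<in>{1..m}. XX r j \<omega> < x r} = S r) \<longleftrightarrow> (\<forall>j\<in>{1..m}. XX r j \<omega> < x r \<longleftrightarrow> j \<in> S r)"
            using sub by (intro collect_eq_iff) auto
        qed
        also have "\<dots> \<longleftrightarrow> (\<forall>p\<in>J. XX (fst p) (snd p) \<omega> \<in> Bs S p)"
          unfolding ballJ fst_conv snd_conv memBs ..
        finally show "(\<forall>r<n. {j\<in>{1..m}. XX r j \<omega> < x r} = S r) \<longleftrightarrow>
              (\<forall>p\<in>J. XX (fst p) (snd p) \<omega> \<in> Bs S p)" .
      qed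
      show "A S = (\<Inter>p\<in>J. XX (fst p) (snd p) -` Bs S p \<inter> space M)"
      proof (intro set_eqI)
        fix \<omega>
        have "\<omega> \<in> (\<Inter>p\<in>J. XX (fst p) (snd p) -` Bs S p \<inter> space M) \<longleftrightarrow>
             \<omega> \<in> space M \<and> (\<forall>p\<in>J. XX (fst p) (snd p) \<omega> \<in> Bs S p)"
          using Jne by blast
        then show "\<omega> \<in> A S \<longleftrightarrow> \<omega> \<in> (\<Inter>p\<in>J. XX (fst p) (snd p) -` Bs S p \<inter> space M)"
          unfolding A_def key by simp
      qed
    qed
    have XXJ: "\<And>p. p \<in> J \<Longrightarrow> XX (fst p) (snd p) \<in> borel_measurable M"
      using assms(10) by (metis prod.collapse)
    have pre_m: "\<And>S p. p \<in> J \<Longrightarrow> XX (fst p) (snd p) -` Bs S p \<inter> space M \<in> sets M"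
      by (rule measurable_sets[OF XXJ Bsm])
    have Am: "\<And>S. S \<in> SS \<Longrightarrow> A S \<in> sets M"
    proof -
      fix S assume "S \<in> SS"
      then show "A S \<in> sets M" unfolding Aeq[OF \<open>S \<in> SS\<close>]
        by (rule_tac sets.finite_INT[OF finJ Jne]) (rule pre_m)
    qed
    have Aval: "\<And>S. S \<in> SS \<Longrightarrow> measure M (A S) = (\<Prod>r<n. g r (S r))"
    proof -
      fix S assume S: "S \<in> SS"
      have sub: "\<And>r. r < n \<Longrightarrow> S r \<subseteq> {1..m}" using S unfolding SS_def by (auto dest: PiE_mem)
      have "measure M (A S) = (\<Prod>p\<in>J. measure M (XX (fst p) (snd p) -` Bs S p \<inter> space M))"
        unfolding Aeq[OF S] using Bsm by (intro P.indep_setsD[OF indep order_refl Jne finJ]) auto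
      also have "\<dots> = (\<Prod>p\<in>J. if snd p \<in> S (fst p) then x (fst p) else 1 - x (fst p))"
      proof (rule prod.cong)
        fix p assume p: "p \<in> J"
        have d: "distr M lborel (XX (fst p) (snd p)) = uniform_measure lborel {0..1}"
          using assms(11)[of "fst p" "snd p"] p by simp
        have t: "0 \<le> x (fst p)" "x (fst p) \<le> 1" using xr p unfolding J_def by auto
        show "measure M (XX (fst p) (snd p) -` Bs S p \<inter> space M) =
            (if snd p \<in> S (fst p) then x (fst p) else 1 - x (fst p))"
          unfolding Bs_def using unif_less[OF d XXJ[OF p] t] unif_ge[OF d XXJ[OF p] t] by simp
      qed simp
      also have "\<dots> = (\<Prod>r<n. \<Prod>j\<in>{1..m}. if j \<in> S r then x r else 1 - x r)"
        unfolding J_def by (simp add: prod.cartesian_product case_prod_unfold)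
      also have "\<dots> = (\<Prod>r<n. g r (S r))"
      proof (rule prod.cong)
        fix r assume "r \<in> {..<n}"
        then have "S r \<subseteq> {1..m}" using sub by simp
        then show "(\<Prod>j\<in>{1..m}. if j \<in> S r then x r else 1 - x r) = g r (S r)"
          unfolding g_def by (rule prod_if_card)
      qed simp
      finally show "measure M (A S) = (\<Prod>r<n. g r (S r))" .
    qed
    have "measure M (F k) = (\<Sum>S\<in>SS. measure M (A S))"
      unfolding Fdec
      by (rule measure_finite_Union[OF finSS]) (use Am Adisj in \<open>auto simp: P.emeasure_eq_measure\<close>)
    also have "\<dots> = (\<Sum>S\<in>SS. \<Prod>r<n. g r (S r))" using Aval by simp
    also have "\<dots> = (\<Prod>r<n. \<Sum>T\<in>{T. T \<subseteq> {1..m} \<and> k r \<le> card T}. g r T)"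
      unfolding SS_def using finT by (intro prod_sum_PiE[symmetric]) auto
    also have "\<dots> = (\<Prod>r<n. bT (k r) (x r))"
    proof (rule prod.cong)
      fix r assume "r \<in> {..<n}"
      then have "k r \<le> m" using k unfolding K_def by (auto simp: PiE_iff)
      then show "(\<Sum>T\<in>{T. T \<subseteq> {1..m} \<and> k r \<le> card T}. g r T) = bT (k r) (x r)"
        unfolding g_def bT_def by (rule sum_subsets_card)
    qed simp
    finally show "measure M (F k) = (\<Prod>r<n. bT (k r) (x r))" .
  qed
  have Edisj: "\<And>A. A \<subseteq> K \<Longrightarrow> disjoint_family_on E A"
    unfolding disjoint_family_on_def using Euniq by blast
  have Cval: "\<And>i. i\<in>K \<Longrightarrow> C (\<lambda>r\<in>{..<n}. real (i r)/real m) = (\<Sum>k\<in>{k\<in>K. \<forall>r<n. k r \<le> i r}. measure M (E k))"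
  proof -
    fix i assume i: "i \<in> K"
    define p where "p = (\<lambda>r\<in>{..<n}. real (i r)/real m)"
    define S where "S = {\<omega>\<in>space M. \<forall>r<n. X r \<omega> \<le> p r}"
    define KI where "KI = {k\<in>K. \<forall>r<n. k r \<le> i r}"
    have "p \<in> cube n" unfolding cube_def p_def PiE_iff
    proof (intro conjI ballI)
      fix r assume "r \<in> {..<n}"
      then have "i r \<le> m" using i unfolding K_def by (auto simp: PiE_iff)
      then show "(\<lambda>r\<in>{..<n}. real (i r) / real m) r \<in> {0..1}" using mpos \<open>r \<in> {..<n}\<close> by simp
    qed simp
    then have Cp: "C p = measure M S" unfolding S_def using assms(9) by blast
    have Sm: "S \<in> sets M" unfolding S_def by (rule sets_Collect_all_less) (rule meas_le[OF Xm])
    have Seq: "S = (\<Union>k\<in>KI. E k) \<union> (S \<inter> (space M - G))"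
    proof (intro set_eqI iffI)
      fix \<omega> assume w: "\<omega> \<in> S"
      show "\<omega> \<in> (\<Union>k\<in>KI. E k) \<union> (S \<inter> (space M - G))"
      proof (cases "\<omega> \<in> G")
        case True
        then obtain k where k: "k \<in> K" "\<omega> \<in> E k" unfolding G_def by auto
        have "\<forall>r<n. k r \<le> i r"
        proof (intro allI impI)
          fix r assume r: "r < n"
          have "(real (k r) - 1) / real m < X r \<omega>" using k r unfolding E_def by auto
          moreover have "X r \<omega> \<le> real (i r) / real m" using w r unfolding S_def p_def by auto
          ultimately have "(real (k r) - 1) / real m < real (i r) / real m" by linarith
          then have "real (k r) - 1 < real (i r)" using mpos by (simp add: divide_less_cancel)
          then show "k r \<le> i r" by linarith
        qed
        then show ?thesis using k unfolding KI_def by auto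
      qed (use w S_def in auto)
    next
      fix \<omega> assume w: "\<omega> \<in> (\<Union>k\<in>KI. E k) \<union> (S \<inter> (space M - G))"
      show "\<omega> \<in> S"
      proof (cases "\<omega> \<in> (\<Union>k\<in>KI. E k)")
        case True
        then obtain k where k: "k \<in> KI" "\<omega> \<in> E k" by auto
        have "\<forall>r<n. X r \<omega> \<le> p r"
        proof (intro allI impI)
          fix r assume r: "r < n"
          have "X r \<omega> < real (k r) / real m" using k r unfolding E_def by auto
          moreover have "real (k r) / real m \<le> real (i r) / real m"
            using k r mpos unfolding KI_def by (simp add: divide_right_mono)
          ultimately show "X r \<omega> \<le> p r" using r unfolding p_def by simp
        qed
        then show ?thesis using k Esp unfolding S_def by auto
      qed (use w in auto)
    qed
    have finKI: "finite KI" unfolding KI_def using finK by simp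
    have UKm: "(\<Union>k\<in>KI. E k) \<in> sets M" using finKI Emeas by auto
    have "measure M S = measure M (\<Union>k\<in>KI. E k)"
      by (subst Seq, rule measure_Un_null_set[OF UKm null_sets_subset[OF Gnull]]) (use Sm Gmeas in auto)
    also have "\<dots> = (\<Sum>k\<in>KI. measure M (E k))"
      by (rule measure_finite_Union[OF finKI]) (use Emeas Edisj KI_def in auto)
    finally show "C (\<lambda>r\<in>{..<n}. real (i r)/real m) = (\<Sum>k\<in>{k\<in>K. \<forall>r<n. k r \<le> i r}. measure M (E k))"
      using Cp unfolding p_def KI_def by simp
  qed
  have Yk: "\<And>k \<omega> r. k\<in>K \<Longrightarrow> \<omega>\<in>E k \<Longrightarrow> Y r \<omega> = order_stat m (\<lambda>j. XX r j \<omega>) (k r)"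
  proof -
    fix k \<omega> r assume k: "k \<in> K" and w: "\<omega> \<in> E k"
    have "Y r \<omega> = (\<Sum>k'\<in>K. indicator (E k') \<omega> * order_stat m (\<lambda>j. XX r j \<omega>) (k' r))"
      unfolding Y_def K_def ..
    also have "\<dots> = (\<Sum>k'\<in>K. if k' = k then order_stat m (\<lambda>j. XX r j \<omega>) (k r) else 0)"
    proof (rule sum.cong)
      fix k' assume k': "k' \<in> K"
      show "indicator (E k') \<omega> * order_stat m (\<lambda>j. XX r j \<omega>) (k' r) =
          (if k' = k then order_stat m (\<lambda>j. XX r j \<omega>) (k r) else 0)"
      proof (cases "k' = k")
        case True
        then show ?thesis using w by simp
      next
        case False
        then have "\<omega> \<notin> E k'" using Euniq[OF k' k _ w] by blast
        then show ?thesis using False by simp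
      qed
    qed simp
    also have "\<dots> = order_stat m (\<lambda>j. XX r j \<omega>) (k r)" using k finK by (simp add: sum.delta)
    finally show "Y r \<omega> = order_stat m (\<lambda>j. XX r j \<omega>) (k r)" .
  qed
  have Y0: "\<And>\<omega> r. \<omega> \<notin> G \<Longrightarrow> Y r \<omega> = 0"
  proof -
    fix \<omega> r assume w: "\<omega> \<notin> G"
    have "Y r \<omega> = (\<Sum>k'\<in>K. indicator (E k') \<omega> * order_stat m (\<lambda>j. XX r j \<omega>) (k' r))"
      unfolding Y_def K_def ..
    also have "\<dots> = 0"
    proof (rule sum.neutral, intro ballI)
      fix k' assume "k' \<in> K"
      then have "\<omega> \<notin> E k'" using w unfolding G_def by blast
      then show "indicator (E k') \<omega> * order_stat m (\<lambda>j. XX r j \<omega>) (k' r) = 0" by simp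
    qed
    finally show "Y r \<omega> = 0" .
  qed
  have osl: "\<And>k r \<omega>. k \<in> K \<Longrightarrow> r < n \<Longrightarrow> order_stat m (\<lambda>j. XX r j \<omega>) (k r) < x r \<longleftrightarrow> k r \<le> cnt r \<omega>"
  proof -
    fix k r \<omega> assume k: "k \<in> K" and r: "r < n"
    then have "1 \<le> k r" "k r \<le> m" unfolding K_def by (auto simp: PiE_iff)
    then show "order_stat m (\<lambda>j. XX r j \<omega>) (k r) < x r \<longleftrightarrow> k r \<le> cnt r \<omega>"
      unfolding cnt_def by (rule order_stat_less)
  qed
  have Yval: "measure M {\<omega>\<in>space M. \<forall>r<n. Y r \<omega> < x r} = (\<Sum>k\<in>K. measure M (E k \<inter> F k))"
  proof -
    define Z where "Z = (space M - G) \<inter> {\<omega>. \<forall>r<n. 0 < x r}"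
    have Yset: "{\<omega>\<in>space M. \<forall>r<n. Y r \<omega> < x r} = (\<Union>k\<in>K. E k \<inter> F k) \<union> Z"
    proof (intro set_eqI iffI)
      fix \<omega> assume w: "\<omega> \<in> {\<omega>\<in>space M. \<forall>r<n. Y r \<omega> < x r}"
      show "\<omega> \<in> (\<Union>k\<in>K. E k \<inter> F k) \<union> Z"
      proof (cases "\<omega> \<in> G")
        case True
        then obtain k where k: "k \<in> K" "\<omega> \<in> E k" unfolding G_def by auto
        have "\<forall>r<n. k r \<le> cnt r \<omega>"
        proof (intro allI impI)
          fix r assume r: "r < n"
          have "Y r \<omega> < x r" using w r by simp
          then have "order_stat m (\<lambda>j. XX r j \<omega>) (k r) < x r" using Yk[OF k] by simp
          then show "k r \<le> cnt r \<omega>" using osl[OF k(1) r] by simp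
        qed
        then have "\<omega> \<in> F k" using w unfolding F_def by simp
        then show ?thesis using k by blast
      next
        case False
        then show ?thesis using w Y0[OF False] unfolding Z_def by simp
      qed
    next
      fix \<omega> assume w: "\<omega> \<in> (\<Union>k\<in>K. E k \<inter> F k) \<union> Z"
      show "\<omega> \<in> {\<omega>\<in>space M. \<forall>r<n. Y r \<omega> < x r}"
      proof (cases "\<omega> \<in> Z")
        case True
        then show ?thesis using Y0 unfolding Z_def by (simp split: if_splits)
      next
        case False
        then obtain k where k: "k \<in> K" "\<omega> \<in> E k" "\<omega> \<in> F k" using w by auto
        have "\<forall>r<n. Y r \<omega> < x r"
        proof (intro allI impI)
          fix r assume r: "r < n"
          have "k r \<le> cnt r \<omega>" using k(3) r unfolding F_def by simp
          then have "order_stat m (\<lambda>j. XX r j \<omega>) (k r) < x r" using osl[OF k(1) r] by simp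
          then show "Y r \<omega> < x r" using Yk[OF k(1,2)] by simp
        qed
        then show ?thesis using k(2) Esp by blast
      qed
    qed
    have Zm: "Z \<in> sets M" unfolding Z_def using Gmeas by (cases "\<forall>r<n. 0 < x r") auto
    have UKm: "(\<Union>k\<in>K. E k \<inter> F k) \<in> sets M" using finK Emeas Fmeas by auto
    have "measure M {\<omega>\<in>space M. \<forall>r<n. Y r \<omega> < x r} = measure M (\<Union>k\<in>K. E k \<inter> F k)"
      unfolding Yset by (rule measure_Un_null_set[OF UKm null_sets_subset[OF Gnull Zm]]) (auto simp: Z_def)
    also have "\<dots> = (\<Sum>k\<in>K. measure M (E k \<inter> F k))"
    proof (rule measure_finite_Union[OF finK])
      show "(\<lambda>k. E k \<inter> F k) ` K \<subseteq> sets M" using Emeas Fmeas by auto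
      show "disjoint_family_on (\<lambda>k. E k \<inter> F k) K"
        unfolding disjoint_family_on_def using Euniq by blast
    qed (simp add: P.emeasure_eq_measure)
    finally show ?thesis .
  qed
  define pt where "pt = (\<lambda>i. \<lambda>r\<in>{..<n}. real (i r) / real m)"
  define bb where "bb = (\<lambda>i. \<Prod>r<n. bern (i r) m (x r))"
  have "bernstein_copula n m C x = (\<Sum>i\<in>PiE {..<n} (\<lambda>_. {0..m}). C (pt i) * bb i)"
    unfolding bernstein_copula_def pt_def bb_def ..
  also have "\<dots> = (\<Sum>i\<in>K. C (pt i) * bb i)"
  proof (rule sum.mono_neutral_right)
    show "finite (PiE {..<n} (\<lambda>_. {0..m}))" by (simp add: finite_PiE)
    show "K \<subseteq> PiE {..<n} (\<lambda>_. {0..m})" unfolding K_def by (rule PiE_mono) auto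
    show "\<forall>i\<in>PiE {..<n} (\<lambda>_. {0..m}) - K. C (pt i) * bb i = 0"
    proof
      fix i assume i: "i \<in> PiE {..<n} (\<lambda>_. {0..m}) - K"
      have "\<exists>r<n. i r \<notin> {1..m}"
      proof (rule ccontr)
        assume "\<not> (\<exists>r<n. i r \<notin> {1..m})"
        then have "i \<in> K" using i unfolding K_def by (simp add: PiE_iff)
        then show False using i by simp
      qed
      then obtain r where r: "r < n" "i r = 0" using i by (auto simp: PiE_iff)
      have "pt i \<in> cube n" unfolding cube_def pt_def PiE_iff
      proof (intro conjI ballI)
        fix r assume "r \<in> {..<n}"
        then have "i r \<le> m" using i by (auto simp: PiE_iff)
        then show "(\<lambda>r\<in>{..<n}. real (i r) / real m) r \<in> {0..1}" using mpos \<open>r \<in> {..<n}\<close> by simp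
      qed simp
      moreover have "pt i r = 0" using r unfolding pt_def by simp
      ultimately have "C (pt i) = 0" using cop_ground r(1) by blast
      then show "C (pt i) * bb i = 0" by simp
    qed
  qed
  also have "\<dots> = (\<Sum>i\<in>K. (\<Sum>k\<in>{k\<in>K. \<forall>r<n. k r \<le> i r}. measure M (E k)) * bb i)"
  proof (rule sum.cong)
    fix i assume "i \<in> K"
    then show "C (pt i) * bb i = (\<Sum>k\<in>{k\<in>K. \<forall>r<n. k r \<le> i r}. measure M (E k)) * bb i"
      unfolding pt_def by (simp only: Cval)
  qed simp
  also have "\<dots> = (\<Sum>i\<in>K. \<Sum>k\<in>{k\<in>K. \<forall>r<n. k r \<le> i r}. measure M (E k) * bb i)"
    by (simp add: sum_distrib_right)
  also have "\<dots> = (\<Sum>k\<in>K. \<Sum>i\<in>{i\<in>K. \<forall>r<n. k r \<le> i r}. measure M (E k) * bb i)"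
    by (rule sum.swap_restrict[OF finK finK, symmetric])
  also have "\<dots> = (\<Sum>k\<in>K. measure M (E k) * (\<Prod>r<n. bT (k r) (x r)))"
  proof (rule sum.cong)
    fix k assume k: "k \<in> K"
    have eqs: "{i\<in>K. \<forall>r<n. k r \<le> i r} = PiE {..<n} (\<lambda>r. {k r..m})"
      using k unfolding K_def PiE_def Pi_def by (auto intro: order_trans)
    have "(\<Prod>r<n. bT (k r) (x r)) = (\<Sum>g\<in>PiE {..<n} (\<lambda>r. {k r..m}). bb g)"
      unfolding bT_def bb_def by (rule prod_sum_PiE) auto
    then show "(\<Sum>i\<in>{i\<in>K. \<forall>r<n. k r \<le> i r}. measure M (E k) * bb i) =
        measure M (E k) * (\<Prod>r<n. bT (k r) (x r))"
      by (simp add: eqs sum_distrib_left)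
  qed simp
  also have "\<dots> = measure M {\<omega>\<in>space M. \<forall>r<n. Y r \<omega> < x r}"
    unfolding Yval by (rule sum.cong) (simp_all only: EF Fval)
  finally show "bernstein_copula n m C x = measure M {\<omega>\<in>space M. \<forall>r<n. Y r \<omega> < x r}" .
qed

end
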